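(* Let $F$ be a field of characteristic different from $2$ and $3$ such that $F^2=F$. Let $K_{10}=F\cdot 1\oplus(K_3\otimes K_3)$ be the Kac Jordan superalgebra in the realization described in the context, with $W=(K_3)_{\bar 1}$. Let $G=Sp(W)\wr C_2=(Sp(W)\times Sp(W))\rtimes C_2$, where $C_2=\{1,\epsilon\}$ and $(f,g)\epsilon=\epsilon(g,f)$. Let $\Phi\colon G\to\mathrm{Aut}(K_{10})$ be the group homomorphism determined by: for $(f,g)\in Sp(W)\times Sp(W)$, $\Phi_{(f,g)}(1)=1$ and $\Phi_{(f,g)}(a\otimes b)=\tilde f(a)\otimes\tilde g(b)$, where for $h\in Sp(W)$, $\tilde h$ is the automorphism of $K_3$ with $\tilde h(e)=e$ and $\tilde h(w)=h(w)$ for $w\in W$; and $\Phi(\epsilon)=\delta$, where $\delta(1)=1$ and $\delta(a\otimes b)=(-1)^{\bar a\bar b}\,b\otimes a$ for homogeneous $a,b\in K_3$. Then $\Phi$ is a group isomorphism; in particular $\mathrm{Aut}(K_{10})\cong Sp(W)\wr C_2$.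
   Context: The Kaplansky superalgebra $K_3$ has even part $Fe$ and odd part $W=Fx+Fy$, with products $e^2=e$, $e x=xe=\tfrac12 x$, $e y=ye=\tfrac12 y$, $xy=e$, $yx=-e$, $x^2=y^2=0$. It carries the supersymmetric bilinear form with $(e|e)=\tfrac12$, $(x|y)=1$, $(y|x)=-1$, $(x|x)=(y|y)=0$, and even and odd parts orthogonal. $Sp(W)$ is the group of linear maps of $W$ preserving the alternating form $(\,\cdot\,|\,\cdot\,)|_{W}$. $K_{10}=F\cdot 1\oplus(K_3\otimes K_3)$ is the superalgebra in which $1$ is an even identity element, $a\otimes b$ (for homogeneous $a,b\in K_3$) has parity $\bar a+\bar b$, and $(a\otimes b)(c\otimes d)=(-1)^{\bar b\bar c}\bigl(ac\otimes bd-\tfrac34(a|c)(b|d)1\bigr)$ for homogeneous $a,b,c,d\in K_3$; this is (isomorphic to) the $10$-dimensional Kac Jordan superalgebra. $\mathrm{Aut}(K_{10})$ denotes the group of automorphisms of graded algebras. *)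

theory Defs
  imports "HOL-Algebra.Group"
begin

text \<open>Basis e, x, y of K3; elements of K3 are coordinate vectors idx3 => 'a.\<close>
datatype idx3 = E | X | Y

lemma UNIV_idx3: "(UNIV :: idx3 set) = {E, X, Y}"
  using idx3.exhaust by auto

instance idx3 :: finite
  by standard (simp add: UNIV_idx3)

fun odd3 :: "idx3 \<Rightarrow> bool" where
  "odd3 E = False" | "odd3 X = True" | "odd3 Y = True"

definition unit3 :: "idx3 \<Rightarrow> idx3 \<Rightarrow> 'a::field" where
  "unit3 k = (\<lambda>i. if i = k then 1 else 0)"

fun k3m :: "idx3 \<Rightarrow> idx3 \<Rightarrow> (idx3 \<Rightarrow> 'a::field)" where
  "k3m E E = unit3 E"
| "k3m E X = (\<lambda>i. (1/2) * unit3 X i)"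
| "k3m X E = (\<lambda>i. (1/2) * unit3 X i)"
| "k3m E Y = (\<lambda>i. (1/2) * unit3 Y i)"
| "k3m Y E = (\<lambda>i. (1/2) * unit3 Y i)"
| "k3m X Y = unit3 E"
| "k3m Y X = (\<lambda>i. - unit3 E i)"
| "k3m X X = (\<lambda>i. 0)"
| "k3m Y Y = (\<lambda>i. 0)"

fun bf3 :: "idx3 \<Rightarrow> idx3 \<Rightarrow> 'a::field" where
  "bf3 E E = 1/2"
| "bf3 X Y = 1"
| "bf3 Y X = -1"
| "bf3 _ _ = 0"

definition sgn3 :: "idx3 \<Rightarrow> idx3 \<Rightarrow> 'a::field" where
  "sgn3 b c = (if odd3 b \<and> odd3 c then -1 else 1)"

text \<open>An element (c, M) stands for c 1 + sum_{k,l} M k l (b_k (x) b_l).\<close>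
type_synonym 'a k10 = "'a \<times> (idx3 \<Rightarrow> idx3 \<Rightarrow> 'a)"

definition k10_add :: "'a::field k10 \<Rightarrow> 'a k10 \<Rightarrow> 'a k10" where
  "k10_add u v = (fst u + fst v, \<lambda>i j. snd u i j + snd v i j)"

definition k10_scale :: "'a::field \<Rightarrow> 'a k10 \<Rightarrow> 'a k10" where
  "k10_scale t u = (t * fst u, \<lambda>i j. t * snd u i j)"

text \<open>Bilinear product: 1 is the identity and
  (a(x)b)(c(x)d) = (-1)^(b c) (ac (x) bd - 3/4 (a|c)(b|d) 1).\<close>
definition k10_mult :: "'a::field k10 \<Rightarrow> 'a k10 \<Rightarrow> 'a k10" where
  "k10_mult u v =
    (fst u * fst v +
       (\<Sum>k\<in>UNIV. \<Sum>l\<in>UNIV. \<Sum>m\<in>UNIV. \<Sum>n\<in>UNIV.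
          snd u k l * snd v m n * sgn3 l m * (- (3/4) * bf3 k m * bf3 l n)),
     \<lambda>i j. fst u * snd v i j + fst v * snd u i j +
       (\<Sum>k\<in>UNIV. \<Sum>l\<in>UNIV. \<Sum>m\<in>UNIV. \<Sum>n\<in>UNIV.
          snd u k l * snd v m n * sgn3 l m * (k3m k m i * k3m l n j)))"

definition k10_even :: "'a::field k10 \<Rightarrow> bool" where
  "k10_even u = (\<forall>i j. odd3 i \<noteq> odd3 j \<longrightarrow> snd u i j = 0)"

definition k10_odd :: "'a::field k10 \<Rightarrow> bool" where
  "k10_odd u = (fst u = 0 \<and> (\<forall>i j. odd3 i = odd3 j \<longrightarrow> snd u i j = 0))"

definition is_aut_k10 :: "('a::field k10 \<Rightarrow> 'a k10) \<Rightarrow> bool" where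
  "is_aut_k10 \<phi> \<longleftrightarrow> bij \<phi>
     \<and> (\<forall>u v. \<phi> (k10_add u v) = k10_add (\<phi> u) (\<phi> v))
     \<and> (\<forall>t u. \<phi> (k10_scale t u) = k10_scale t (\<phi> u))
     \<and> (\<forall>u v. \<phi> (k10_mult u v) = k10_mult (\<phi> u) (\<phi> v))
     \<and> (\<forall>u. k10_even u \<longrightarrow> k10_even (\<phi> u))
     \<and> (\<forall>u. k10_odd u \<longrightarrow> k10_odd (\<phi> u))"

definition Aut_K10 :: "('a::field k10 \<Rightarrow> 'a k10) monoid" where
  "Aut_K10 = \<lparr>carrier = {\<phi>. is_aut_k10 \<phi>}, mult = (\<circ>), one = id\<rparr>"

text \<open>W = F x + F y, an element (a,b) stands for a x + b y; (x|y) = 1.\<close>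
type_synonym 'a W = "'a \<times> 'a"

definition wform :: "'a::field W \<Rightarrow> 'a W \<Rightarrow> 'a" where
  "wform u v = fst u * snd v - snd u * fst v"

definition Sp :: "('a::field W \<Rightarrow> 'a W) set" where
  "Sp = {h. (\<forall>u v. h (fst u + fst v, snd u + snd v) = (fst (h u) + fst (h v), snd (h u) + snd (h v)))
          \<and> (\<forall>t u. h (t * fst u, t * snd u) = (t * fst (h u), t * snd (h u)))
          \<and> (\<forall>u v. wform (h u) (h v) = wform u v)}"

text \<open>(f, g, s) stands for (f,g) eps^s; eps (f,g) eps = (g,f).\<close>
definition wreath_mult ::
  "('a W \<Rightarrow> 'a W) \<times> ('a W \<Rightarrow> 'a W) \<times> bool \<Rightarrow> ('a W \<Rightarrow> 'a W) \<times> ('a W \<Rightarrow> 'a W) \<times> bool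
   \<Rightarrow> ('a W \<Rightarrow> 'a W) \<times> ('a W \<Rightarrow> 'a W) \<times> bool" where
  "wreath_mult p q = (case p of (f, g, s) \<Rightarrow> case q of (f', g', s') \<Rightarrow>
     if s then (f \<circ> g', g \<circ> f', \<not> s') else (f \<circ> f', g \<circ> g', s'))"

definition SpWrC2 :: "(('a::field W \<Rightarrow> 'a W) \<times> ('a W \<Rightarrow> 'a W) \<times> bool) monoid" where
  "SpWrC2 = \<lparr>carrier = {(f, g, s). f \<in> Sp \<and> g \<in> Sp}, mult = wreath_mult, one = (id, id, False)\<rparr>"

definition tilde :: "('a::field W \<Rightarrow> 'a W) \<Rightarrow> (idx3 \<Rightarrow> 'a) \<Rightarrow> (idx3 \<Rightarrow> 'a)" where
  "tilde h v = (\<lambda>i. case i of E \<Rightarrow> v E | X \<Rightarrow> fst (h (v X, v Y)) | Y \<Rightarrow> snd (h (v X, v Y)))"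

text \<open>Linear extension of 1 |-> 1, a (x) b |-> tilde f a (x) tilde g b.\<close>
definition Phi_pair :: "('a::field W \<Rightarrow> 'a W) \<Rightarrow> ('a W \<Rightarrow> 'a W) \<Rightarrow> 'a k10 \<Rightarrow> 'a k10" where
  "Phi_pair f g u = (fst u, \<lambda>i j. \<Sum>k\<in>UNIV. \<Sum>l\<in>UNIV.
      snd u k l * (tilde f (unit3 k) i * tilde g (unit3 l) j))"

definition delta :: "'a::field k10 \<Rightarrow> 'a k10" where
  "delta u = (fst u, \<lambda>i j. sgn3 j i * snd u j i)"

definition Phi :: "('a::field W \<Rightarrow> 'a W) \<times> ('a W \<Rightarrow> 'a W) \<times> bool \<Rightarrow> 'a k10 \<Rightarrow> 'a k10" where
  "Phi p = (case p of (f, g, s) \<Rightarrow> if s then Phi_pair f g \<circ> delta else Phi_pair f g)"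

end

theory Submission
  imports Defs
begin

definition V :: "'a::field \<Rightarrow> 'a \<Rightarrow> 'a \<Rightarrow> 'a \<Rightarrow> 'a \<Rightarrow> 'a \<Rightarrow> 'a \<Rightarrow> 'a \<Rightarrow> 'a \<Rightarrow> 'a \<Rightarrow> 'a k10" where
"V c ee ex ey xe xx xy ye yx yy = (c, \<lambda>i j. case i of
   E \<Rightarrow> (case j of E \<Rightarrow> ee | X \<Rightarrow> ex | Y \<Rightarrow> ey)
 | X \<Rightarrow> (case j of E \<Rightarrow> xe | X \<Rightarrow> xx | Y \<Rightarrow> xy)
 | Y \<Rightarrow> (case j of E \<Rightarrow> ye | X \<Rightarrow> yx | Y \<Rightarrow> yy))"

definition lm :: "'a::field \<Rightarrow> 'a \<Rightarrow> 'a \<Rightarrow> 'a \<Rightarrow> 'a W \<Rightarrow> 'a W" where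
 "lm a b c d = (\<lambda>u. (a * fst u + b * snd u, c * fst u + d * snd u))"

lemma tl: "tilde (lm a b c d) (unit3 k) i = (case k of E \<Rightarrow> (case i of E \<Rightarrow> 1 | _ \<Rightarrow> 0)
   | X \<Rightarrow> (case i of E \<Rightarrow> 0 | X \<Rightarrow> a | Y \<Rightarrow> c) | Y \<Rightarrow> (case i of E \<Rightarrow> 0 | X \<Rightarrow> b | Y \<Rightarrow> d))"
  by (cases k; cases i; simp add: tilde_def lm_def unit3_def)

lemma V_all: "u = V (fst u) (snd u E E) (snd u E X) (snd u E Y) (snd u X E) (snd u X X) (snd u X Y)
   (snd u Y E) (snd u Y X) (snd u Y Y)"
proof -
  have "snd u = snd (V (fst u) (snd u E E) (snd u E X) (snd u E Y) (snd u X E) (snd u X X) (snd u X Y)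
   (snd u Y E) (snd u Y X) (snd u Y Y))"
    by (rule ext, rule ext, simp add: V_def split: idx3.split)
  then show ?thesis by (simp add: V_def prod_eq_iff)
qed

lemma V_eq: "(V c ee ex ey xe xx xy ye yx yy = V c' ee' ex' ey' xe' xx' xy' ye' yx' yy') \<longleftrightarrow>
  c = c' \<and> ee = ee' \<and> ex = ex' \<and> ey = ey' \<and> xe = xe' \<and> xx = xx' \<and> xy = xy' \<and> ye = ye' \<and> yx = yx' \<and> yy = yy'"
  (is "?l \<longleftrightarrow> ?r")
proof
  assume ?l
  then have "fst (V c ee ex ey xe xx xy ye yx yy) = fst (V c' ee' ex' ey' xe' xx' xy' ye' yx' yy')"
   and s: "\<And>i j. snd (V c ee ex ey xe xx xy ye yx yy) i j = snd (V c' ee' ex' ey' xe' xx' xy' ye' yx' yy') i j"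
    by auto
  from this(1) s[of E E] s[of E X] s[of E Y] s[of X E] s[of X X] s[of X Y] s[of Y E] s[of Y X] s[of Y Y]
  show ?r by (simp add: V_def)
qed simp

lemma mult_fst: "fst (k10_mult (V c ee ex ey xe xx xy ye yx yy) (V d ee' ex' ey' xe' xx' xy' ye' yx' yy')) = c * d + 3/4 * (xx * yy' + xx' * yy - xy * yx' - xy' * yx) + 3/8 * (ex' * ey - ex * ey' + xe' * ye - xe * ye') - 3/16 * ee * ee'"
  by (simp add: k10_mult_def V_def UNIV_idx3 sgn3_def unit3_def add_divide_distrib diff_divide_distrib algebra_simps)
lemma mult_EE: "snd (k10_mult (V c ee ex ey xe xx xy ye yx yy) (V d ee' ex' ey' xe' xx' xy' ye' yx' yy')) E E = c * ee' + d * ee + ee * ee' + ex * ey' - ex' * ey + xe * ye' - xe' * ye + xy * yx' + xy' * yx - xx * yy' - xx' * yy"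
  by (simp add: k10_mult_def V_def UNIV_idx3 sgn3_def unit3_def add_divide_distrib diff_divide_distrib algebra_simps)
lemma mult_EX: "snd (k10_mult (V c ee ex ey xe xx xy ye yx yy) (V d ee' ex' ey' xe' xx' xy' ye' yx' yy')) E X = c * ex' + d * ex + (ee * ex' + ee' * ex + xe * yx' + xe' * yx - xx * ye' - xx' * ye)/2"
  by (simp add: k10_mult_def V_def UNIV_idx3 sgn3_def unit3_def add_divide_distrib diff_divide_distrib algebra_simps)
lemma mult_EY: "snd (k10_mult (V c ee ex ey xe xx xy ye yx yy) (V d ee' ex' ey' xe' xx' xy' ye' yx' yy')) E Y = c * ey' + d * ey + (ee * ey' + ee' * ey + xe * yy' + xe' * yy - xy * ye' - xy' * ye)/2"
  by (simp add: k10_mult_def V_def UNIV_idx3 sgn3_def unit3_def add_divide_distrib diff_divide_distrib algebra_simps)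
lemma mult_XE: "snd (k10_mult (V c ee ex ey xe xx xy ye yx yy) (V d ee' ex' ey' xe' xx' xy' ye' yx' yy')) X E = c * xe' + d * xe + (ee * xe' + ee' * xe + ey * xx' + ey' * xx - ex * xy' - ex' * xy)/2"
  by (simp add: k10_mult_def V_def UNIV_idx3 sgn3_def unit3_def add_divide_distrib diff_divide_distrib algebra_simps)
lemma mult_XX: "snd (k10_mult (V c ee ex ey xe xx xy ye yx yy) (V d ee' ex' ey' xe' xx' xy' ye' yx' yy')) X X = c * xx' + d * xx + (ee * xx' + ee' * xx + ex' * xe - ex * xe')/4"
  by (simp add: k10_mult_def V_def UNIV_idx3 sgn3_def unit3_def add_divide_distrib diff_divide_distrib algebra_simps)
lemma mult_XY: "snd (k10_mult (V c ee ex ey xe xx xy ye yx yy) (V d ee' ex' ey' xe' xx' xy' ye' yx' yy')) X Y = c * xy' + d * xy + (ee * xy' + ee' * xy + ey' * xe - ey * xe')/4"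
  by (simp add: k10_mult_def V_def UNIV_idx3 sgn3_def unit3_def add_divide_distrib diff_divide_distrib algebra_simps)
lemma mult_YE: "snd (k10_mult (V c ee ex ey xe xx xy ye yx yy) (V d ee' ex' ey' xe' xx' xy' ye' yx' yy')) Y E = c * ye' + d * ye + (ee * ye' + ee' * ye + ey * yx' + ey' * yx - ex * yy' - ex' * yy)/2"
  by (simp add: k10_mult_def V_def UNIV_idx3 sgn3_def unit3_def add_divide_distrib diff_divide_distrib algebra_simps)
lemma mult_YX: "snd (k10_mult (V c ee ex ey xe xx xy ye yx yy) (V d ee' ex' ey' xe' xx' xy' ye' yx' yy')) Y X = c * yx' + d * yx + (ee * yx' + ee' * yx + ex' * ye - ex * ye')/4"
  by (simp add: k10_mult_def V_def UNIV_idx3 sgn3_def unit3_def add_divide_distrib diff_divide_distrib algebra_simps)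
lemma mult_YY: "snd (k10_mult (V c ee ex ey xe xx xy ye yx yy) (V d ee' ex' ey' xe' xx' xy' ye' yx' yy')) Y Y = c * yy' + d * yy + (ee * yy' + ee' * yy + ey' * ye - ey * ye')/4"
  by (simp add: k10_mult_def V_def UNIV_idx3 sgn3_def unit3_def add_divide_distrib diff_divide_distrib algebra_simps)
lemma mult_V: "k10_mult (V c ee ex ey xe xx xy ye yx yy) (V d ee' ex' ey' xe' xx' xy' ye' yx' yy') =
  V (c * d + 3/4 * (xx * yy' + xx' * yy - xy * yx' - xy' * yx) + 3/8 * (ex' * ey - ex * ey' + xe' * ye - xe * ye') - 3/16 * ee * ee')
    (c * ee' + d * ee + ee * ee' + ex * ey' - ex' * ey + xe * ye' - xe' * ye + xy * yx' + xy' * yx - xx * yy' - xx' * yy)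
    (c * ex' + d * ex + (ee * ex' + ee' * ex + xe * yx' + xe' * yx - xx * ye' - xx' * ye)/2)
    (c * ey' + d * ey + (ee * ey' + ee' * ey + xe * yy' + xe' * yy - xy * ye' - xy' * ye)/2)
    (c * xe' + d * xe + (ee * xe' + ee' * xe + ey * xx' + ey' * xx - ex * xy' - ex' * xy)/2)
    (c * xx' + d * xx + (ee * xx' + ee' * xx + ex' * xe - ex * xe')/4)
    (c * xy' + d * xy + (ee * xy' + ee' * xy + ey' * xe - ey * xe')/4)
    (c * ye' + d * ye + (ee * ye' + ee' * ye + ey * yx' + ey' * yx - ex * yy' - ex' * yy)/2)
    (c * yx' + d * yx + (ee * yx' + ee' * yx + ex' * ye - ex * ye')/4)
    (c * yy' + d * yy + (ee * yy' + ee' * yy + ey' * ye - ey * ye')/4)"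
  apply (subst V_all[of "k10_mult _ _"])
  unfolding V_eq mult_fst mult_EE mult_EX mult_EY mult_XE mult_XX mult_XY mult_YE mult_YX mult_YY by simp

lemma add_V: "k10_add (V c ee ex ey xe xx xy ye yx yy) (V d ee' ex' ey' xe' xx' xy' ye' yx' yy') =
   V (c+d) (ee+ee') (ex+ex') (ey+ey') (xe+xe') (xx+xx') (xy+xy') (ye+ye') (yx+yx') (yy+yy')"
  by (simp add: k10_add_def V_def fun_eq_iff split: idx3.split)

lemma scale_V: "k10_scale t (V c ee ex ey xe xx xy ye yx yy) =
   V (t*c) (t*ee) (t*ex) (t*ey) (t*xe) (t*xx) (t*xy) (t*ye) (t*yx) (t*yy)"
  by (simp add: k10_scale_def V_def fun_eq_iff split: idx3.split)

lemma delta_V: "delta (V c ee ex ey xe xx xy ye yx yy) = V c ee xe ye ex (-xx) (-yx) ey (-xy) (-yy)"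
  by (simp add: delta_def V_def fun_eq_iff sgn3_def split: idx3.split)

lemma even_V: "k10_even (V c ee ex ey xe xx xy ye yx yy) \<longleftrightarrow> ex = 0 \<and> ey = 0 \<and> xe = 0 \<and> ye = 0"
  unfolding k10_even_def
proof
  assume h: "\<forall>i j. odd3 i \<noteq> odd3 j \<longrightarrow> snd (V c ee ex ey xe xx xy ye yx yy) i j = 0"
  from h[rule_format, of E X] h[rule_format, of E Y] h[rule_format, of X E] h[rule_format, of Y E]
  show "ex = 0 \<and> ey = 0 \<and> xe = 0 \<and> ye = 0" by (simp add: V_def)
next
  assume "ex = 0 \<and> ey = 0 \<and> xe = 0 \<and> ye = 0"
  then show "\<forall>i j. odd3 i \<noteq> odd3 j \<longrightarrow> snd (V c ee ex ey xe xx xy ye yx yy) i j = 0"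
    by (simp add: V_def split: idx3.split)
qed

lemma odd_V: "k10_odd (V c ee ex ey xe xx xy ye yx yy) \<longleftrightarrow> c = 0 \<and> ee = 0 \<and> xx = 0 \<and> xy = 0 \<and> yx = 0 \<and> yy = 0"
  unfolding k10_odd_def
proof
  assume h: "fst (V c ee ex ey xe xx xy ye yx yy) = 0 \<and> (\<forall>i j. odd3 i = odd3 j \<longrightarrow> snd (V c ee ex ey xe xx xy ye yx yy) i j = 0)"
  then have h2: "\<forall>i j. odd3 i = odd3 j \<longrightarrow> snd (V c ee ex ey xe xx xy ye yx yy) i j = 0" by blast
  from h h2[rule_format, of E E] h2[rule_format, of X X] h2[rule_format, of X Y] h2[rule_format, of Y X] h2[rule_format, of Y Y]
  show "c = 0 \<and> ee = 0 \<and> xx = 0 \<and> xy = 0 \<and> yx = 0 \<and> yy = 0" by (simp add: V_def)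
next
  assume "c = 0 \<and> ee = 0 \<and> xx = 0 \<and> xy = 0 \<and> yx = 0 \<and> yy = 0"
  then show "fst (V c ee ex ey xe xx xy ye yx yy) = 0 \<and> (\<forall>i j. odd3 i = odd3 j \<longrightarrow> snd (V c ee ex ey xe xx xy ye yx yy) i j = 0)"
    by (simp add: V_def split: idx3.split)
qed

lemma PP_V: "Phi_pair (lm a b c d) (lm a' b' c' d') (V t ee ex ey xe xx xy ye yx yy) =
  V t ee (ex * a' + ey * b') (ex * c' + ey * d') (xe * a + ye * b)
   (xx * (a * a') + xy * (a * b') + (yx * (b * a') + yy * (b * b')))
   (xx * (a * c') + xy * (a * d') + (yx * (b * c') + yy * (b * d')))
   (xe * c + ye * d)
   (xx * (c * a') + xy * (c * b') + (yx * (d * a') + yy * (d * b')))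
   (xx * (c * c') + xy * (c * d') + (yx * (d * c') + yy * (d * d')))"
proof -
  have "\<And>i j. snd (Phi_pair (lm a b c d) (lm a' b' c' d') (V t ee ex ey xe xx xy ye yx yy)) i j = 
     snd (V t ee (ex * a' + ey * b') (ex * c' + ey * d') (xe * a + ye * b)
   (xx * (a * a') + xy * (a * b') + (yx * (b * a') + yy * (b * b')))
   (xx * (a * c') + xy * (a * d') + (yx * (b * c') + yy * (b * d')))
   (xe * c + ye * d)
   (xx * (c * a') + xy * (c * b') + (yx * (d * a') + yy * (d * b')))
   (xx * (c * c') + xy * (c * d') + (yx * (d * c') + yy * (d * d')))) i j"
    subgoal for i j by (cases i; cases j; simp add: Phi_pair_def tl V_def UNIV_idx3)
    done
  then show ?thesis by (simp add: prod_eq_iff fun_eq_iff Phi_pair_def V_def)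
qed


lemma V_exhaust: obtains c ee ex ey xe xx xy ye yx yy where "u = V c ee ex ey xe xx xy ye yx yy"
  using V_all by blast

lemma PP_multD: fixes a :: "'a::field"
  shows "Phi_pair (lm a b c d) (lm a' b' c' d') (V (c0 * d0 + 3/4 * ((a*d - b*c)*(a'*d' - b'*c')) * (xx * yy' + xx' * yy - xy * yx' - xy' * yx) + 3/8 * ((a'*d' - b'*c') * (ex' * ey - ex * ey') + (a*d - b*c) * (xe' * ye - xe * ye')) - 3/16 * ee * ee') (c0 * ee' + d0 * ee + ee * ee' + (a'*d' - b'*c') * (ex * ey' - ex' * ey) + (a*d - b*c) * (xe * ye' - xe' * ye) + ((a*d - b*c)*(a'*d' - b'*c')) * (xy * yx' + xy' * yx - xx * yy' - xx' * yy)) (c0 * ex' + d0 * ex + (ee * ex' + ee' * ex + (a*d - b*c) * (xe * yx' + xe' * yx - xx * ye' - xx' * ye))/2) (c0 * ey' + d0 * ey + (ee * ey' + ee' * ey + (a*d - b*c) * (xe * yy' + xe' * yy - xy * ye' - xy' * ye))/2) (c0 * xe' + d0 * xe + (ee * xe' + ee' * xe + (a'*d' - b'*c') * (ey * xx' + ey' * xx - ex * xy' - ex' * xy))/2) (c0 * xx' + d0 * xx + (ee * xx' + ee' * xx + ex' * xe - ex * xe')/4) (c0 * xy' + d0 * xy + (ee * xy' + ee' * xy + ey' * xe - ey * xe')/4) (c0 * ye' + d0 * ye + (ee * ye' + ee' * ye + (a'*d' - b'*c') * (ey * yx' + ey' * yx - ex * yy' - ex' * yy))/2) (c0 * yx'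 + d0 * yx + (ee * yx' + ee' * yx + ex' * ye - ex * ye')/4) (c0 * yy' + d0 * yy + (ee * yy' + ee' * yy + ey' * ye - ey * ye')/4)) = k10_mult (Phi_pair (lm a b c d) (lm a' b' c' d') (V c0 ee ex ey xe xx xy ye yx yy)) (Phi_pair (lm a b c d) (lm a' b' c' d') (V d0 ee' ex' ey' xe' xx' xy' ye' yx' yy'))"
  unfolding mult_V PP_V V_eq
  apply (intro conjI)
  apply (simp_all add: add_divide_distrib diff_divide_distrib algebra_simps)
  done

lemma PP_mult_V: fixes a :: "'a::field" assumes "a*d - b*c = 1" "a'*d' - b'*c' = 1"
  shows "Phi_pair (lm a b c d) (lm a' b' c' d') (k10_mult (V c0 ee ex ey xe xx xy ye yx yy) (V d0 ee' ex' ey' xe' xx' xy' ye' yx' yy'))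
   = k10_mult (Phi_pair (lm a b c d) (lm a' b' c' d') (V c0 ee ex ey xe xx xy ye yx yy)) (Phi_pair (lm a b c d) (lm a' b' c' d') (V d0 ee' ex' ey' xe' xx' xy' ye' yx' yy'))"
proof -
  have "k10_mult (V c0 ee ex ey xe xx xy ye yx yy) (V d0 ee' ex' ey' xe' xx' xy' ye' yx' yy') = (V (c0 * d0 + 3/4 * ((a*d - b*c)*(a'*d' - b'*c')) * (xx * yy' + xx' * yy - xy * yx' - xy' * yx) + 3/8 * ((a'*d' - b'*c') * (ex' * ey - ex * ey') + (a*d - b*c) * (xe' * ye - xe * ye')) - 3/16 * ee * ee') (c0 * ee' + d0 * ee + ee * ee' + (a'*d' - b'*c') * (ex * ey' - ex' * ey) + (a*d - b*c) * (xe * ye' - xe' * ye) + ((a*d - b*c)*(a'*d' - b'*c')) * (xy * yx' + xy' * yx - xx * yy' - xx' * yy)) (c0 * ex' + d0 * ex + (ee * ex' + ee' * ex + (a*d - b*c) * (xe * yx' + xe' * yx - xx * ye' - xx' * ye))/2) (c0 * ey' + d0 * ey + (ee * ey' + ee' * ey + (a*d - b*c) * (xe * yy' + xe' * yy - xy * ye' - xy' * ye))/2) (c0 * xe' + d0 * xe + (ee * xe' + ee' * xe + (a'*d' - b'*c') * (ey * xx' + ey' * xx - ex * xy' - ex' * xy))/2) (c0 * xx' + d0 * xx + (ee * xx' + ee' * xx + ex' * xe - ex * xe')/4) (c0 * xy' + d0 * xy + (ee * xy' + ee' * xy + ey' * xe - ey * xe')/4) (c0 * ye' + d0 * ye + (ee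 * ye' + ee' * ye + (a'*d' - b'*c') * (ey * yx' + ey' * yx - ex * yy' - ex' * yy))/2) (c0 * yx' + d0 * yx + (ee * yx' + ee' * yx + ex' * ye - ex * ye')/4) (c0 * yy' + d0 * yy + (ee * yy' + ee' * yy + ey' * ye - ey * ye')/4))"
    unfolding mult_V assms V_eq by simp
  then show ?thesis using PP_multD[of a b c d a' b' c' d'] by simp
qed

lemma PP_mult: fixes a :: "'a::field" assumes "a*d - b*c = 1" "a'*d' - b'*c' = 1"
  shows "Phi_pair (lm a b c d) (lm a' b' c' d') (k10_mult u v)
   = k10_mult (Phi_pair (lm a b c d) (lm a' b' c' d') u) (Phi_pair (lm a b c d) (lm a' b' c' d') v)"
  by (cases u rule: V_exhaust; cases v rule: V_exhaust; simp only: PP_mult_V[OF assms])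

lemma lm_comp: "lm a b c d \<circ> lm p q r s = lm (a*p+b*r) (a*q+b*s) (c*p+d*r) (c*q+d*s)"
  by (simp add: fun_eq_iff lm_def algebra_simps)

lemma lm_id: "lm 1 0 0 1 = id"
  by (simp add: fun_eq_iff lm_def)

lemma PP_comp: "Phi_pair (lm a b c d) (lm a' b' c' d') (Phi_pair (lm p q r s) (lm p' q' r' s') u) =
  Phi_pair (lm (a*p+b*r) (a*q+b*s) (c*p+d*r) (c*q+d*s)) (lm (a'*p'+b'*r') (a'*q'+b'*s') (c'*p'+d'*r') (c'*q'+d'*s')) u"
  by (cases u rule: V_exhaust; simp add: PP_V V_eq algebra_simps)

lemma PP_id: "Phi_pair (lm 1 0 0 1) (lm 1 0 0 1) u = u"
  by (cases u rule: V_exhaust; simp add: PP_V)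

lemma delta_delta: "delta (delta u) = u"
  by (cases u rule: V_exhaust; simp add: delta_V)

lemma delta_PP: "delta (Phi_pair (lm a b c d) (lm a' b' c' d') u) = Phi_pair (lm a' b' c' d') (lm a b c d) (delta u)"
  by (cases u rule: V_exhaust; simp add: delta_V PP_V V_eq algebra_simps)

lemma delta_mult: "delta (k10_mult u v) = k10_mult (delta u) (delta v)"
  apply (cases u rule: V_exhaust; cases v rule: V_exhaust; simp only: delta_V mult_V V_eq)
  apply (intro conjI)
  apply (simp_all add: add_divide_distrib diff_divide_distrib algebra_simps)
  done



lemma lm_wform: "wform (lm a b c d u) (lm a b c d v) = (a*d - b*c) * wform u v"
  by (simp add: lm_def wform_def algebra_simps)

lemma lm_Sp: "a*d - b*c = 1 \<Longrightarrow> lm a b c d \<in> Sp"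
  unfolding Sp_def by (simp add: lm_wform) (simp add: lm_def algebra_simps)

lemma Sp_E: assumes "h \<in> Sp" shows "\<exists>a b c d. h = lm a b c d \<and> a*d - b*c = 1"
proof -
  have add: "\<And>u v. h (fst u + fst v, snd u + snd v) = (fst (h u) + fst (h v), snd (h u) + snd (h v))"
   and sc: "\<And>t u. h (t * fst u, t * snd u) = (t * fst (h u), t * snd (h u))"
   and wf: "\<And>u v. wform (h u) (h v) = wform u v" using assms unfolding Sp_def by auto
  define a where "a = fst (h (1,0))"
  define b where "b = fst (h (0,1))"
  define c where "c = snd (h (1,0))"
  define d where "d = snd (h (0,1))"
  have "h w = lm a b c d w" for w
  proof -
    obtain p q where w: "w = (p, q)" by (cases w)
    have "h (p, q) = (fst (h (p,0)) + fst (h (0,q)), snd (h (p,0)) + snd (h (0,q)))"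
      using add[of "(p,0)" "(0,q)"] by simp
    moreover have "h (p,0) = (p * a, p * c)" using sc[of p "(1,0)"] by (simp add: a_def c_def)
    moreover have "h (0,q) = (q * b, q * d)" using sc[of q "(0,1)"] by (simp add: b_def d_def)
    ultimately show ?thesis by (simp add: w lm_def algebra_simps)
  qed
  then have "h = lm a b c d" by auto
  moreover have "a*d - b*c = 1" using wf[of "(1,0)" "(0,1)"] by (simp add: wform_def a_def b_def c_def d_def algebra_simps)
  ultimately show ?thesis by blast
qed

lemma adj_id: fixes a :: "'a::field" assumes "a*d - b*c = 1"
  shows "lm (d*a + (-b)*c) (d*b + (-b)*d) ((-c)*a + a*c) ((-c)*b + a*d) = lm 1 0 0 1"
    and "lm (a*d + b*(-c)) (a*(-b) + b*a) (c*d + d*(-c)) (c*(-b) + d*a) = lm 1 0 0 1"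
  using assms by (simp_all add: algebra_simps)

lemma PP_aut: fixes a :: "'a::field" assumes h: "a*d - b*c = 1" and h': "a'*d' - b'*c' = 1"
  shows "is_aut_k10 (Phi_pair (lm a b c d) (lm a' b' c' d'))"
  unfolding is_aut_k10_def
proof (intro conjI allI impI)
  show "bij (Phi_pair (lm a b c d) (lm a' b' c' d'))"
  proof (rule o_bij[where g = "Phi_pair (lm d (-b) (-c) a) (lm d' (-b') (-c') a')"])
    show "Phi_pair (lm d (- b) (- c) a) (lm d' (- b') (- c') a') \<circ> Phi_pair (lm a b c d) (lm a' b' c' d') = id"
      unfolding fun_eq_iff comp_def PP_comp adj_id[OF h] adj_id[OF h'] PP_id by simp
    show "Phi_pair (lm a b c d) (lm a' b' c' d') \<circ> Phi_pair (lm d (- b) (- c) a) (lm d' (- b') (- c') a') = id"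
      unfolding fun_eq_iff comp_def PP_comp adj_id[OF h] adj_id[OF h'] PP_id by simp
  qed
next
  fix u v :: "'a k10" show "Phi_pair (lm a b c d) (lm a' b' c' d') (k10_add u v) =
       k10_add (Phi_pair (lm a b c d) (lm a' b' c' d') u) (Phi_pair (lm a b c d) (lm a' b' c' d') v)"
    by (cases u rule: V_exhaust; cases v rule: V_exhaust; simp add: add_V PP_V V_eq algebra_simps)
next
  fix t and u :: "'a k10" show "Phi_pair (lm a b c d) (lm a' b' c' d') (k10_scale t u) =
       k10_scale t (Phi_pair (lm a b c d) (lm a' b' c' d') u)"
    by (cases u rule: V_exhaust; simp add: scale_V PP_V V_eq algebra_simps)
next
  fix u v :: "'a k10" show "Phi_pair (lm a b c d) (lm a' b' c' d') (k10_mult u v) =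
       k10_mult (Phi_pair (lm a b c d) (lm a' b' c' d') u) (Phi_pair (lm a b c d) (lm a' b' c' d') v)"
    by (rule PP_mult[OF h h'])
next
  fix u :: "'a k10" assume "k10_even u" then show "k10_even (Phi_pair (lm a b c d) (lm a' b' c' d') u)"
    by (cases u rule: V_exhaust; simp add: even_V PP_V)
next
  fix u :: "'a k10" assume "k10_odd u" then show "k10_odd (Phi_pair (lm a b c d) (lm a' b' c' d') u)"
    by (cases u rule: V_exhaust; simp add: odd_V PP_V)
qed

lemma delta_aut: "is_aut_k10 (delta :: 'a::field k10 \<Rightarrow> 'a k10)"
  unfolding is_aut_k10_def
proof (intro conjI allI impI)
  show "bij (delta :: 'a::field k10 \<Rightarrow> 'a k10)"
    by (rule o_bij[where g = delta]) (simp_all add: fun_eq_iff delta_delta)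
next
  fix u v :: "'a k10" show "delta (k10_add u v) = k10_add (delta u) (delta v)"
    by (cases u rule: V_exhaust; cases v rule: V_exhaust; simp add: add_V delta_V V_eq)
next
  fix t and u :: "'a k10" show "delta (k10_scale t u) = k10_scale t (delta u)"
    by (cases u rule: V_exhaust; simp add: scale_V delta_V V_eq)
next
  fix u v :: "'a k10" show "delta (k10_mult u v) = k10_mult (delta u) (delta v)"
    by (rule delta_mult)
next
  fix u :: "'a k10" assume "k10_even u" then show "k10_even (delta u)"
    by (cases u rule: V_exhaust; simp add: even_V delta_V)
next
  fix u :: "'a k10" assume "k10_odd u" then show "k10_odd (delta u)"
    by (cases u rule: V_exhaust; simp add: odd_V delta_V)
qed

lemma aut_comp: assumes "is_aut_k10 \<phi>" "is_aut_k10 \<psi>" shows "is_aut_k10 (\<phi> \<circ> \<psi>)"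
proof -
  have a: "bij \<phi>" "\<And>u v. \<phi> (k10_add u v) = k10_add (\<phi> u) (\<phi> v)"
     "\<And>t u. \<phi> (k10_scale t u) = k10_scale t (\<phi> u)"
     "\<And>u v. \<phi> (k10_mult u v) = k10_mult (\<phi> u) (\<phi> v)"
     "\<And>u. k10_even u \<Longrightarrow> k10_even (\<phi> u)" "\<And>u. k10_odd u \<Longrightarrow> k10_odd (\<phi> u)"
    using assms(1) unfolding is_aut_k10_def by blast+
  have b: "bij \<psi>" "\<And>u v. \<psi> (k10_add u v) = k10_add (\<psi> u) (\<psi> v)"
     "\<And>t u. \<psi> (k10_scale t u) = k10_scale t (\<psi> u)"
     "\<And>u v. \<psi> (k10_mult u v) = k10_mult (\<psi> u) (\<psi> v)"
     "\<And>u. k10_even u \<Longrightarrow> k10_even (\<psi> u)" "\<And>u. k10_odd u \<Longrightarrow> k10_odd (\<psi> u)"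
    using assms(2) unfolding is_aut_k10_def by blast+
  show ?thesis unfolding is_aut_k10_def comp_def
    using bij_comp[OF b(1) a(1)] a b by (simp add: comp_def)
qed

lemma Phi_lm: "Phi (lm a b c d, lm a' b' c' d', s) =
   (if s then Phi_pair (lm a b c d) (lm a' b' c' d') \<circ> delta else Phi_pair (lm a b c d) (lm a' b' c' d'))"
  by (simp add: Phi_def)

lemma Phi_aut: "p \<in> carrier SpWrC2 \<Longrightarrow> is_aut_k10 (Phi p)"
proof -
  assume "p \<in> carrier SpWrC2"
  then obtain f g s where p: "p = (f, g, s)" and f: "f \<in> Sp" and g: "g \<in> Sp"
    by (auto simp: SpWrC2_def)
  obtain a b c d where f': "f = lm a b c d" "a*d - b*c = 1" using Sp_E[OF f] by blast
  obtain a' b' c' d' where g': "g = lm a' b' c' d'" "a'*d' - b'*c' = 1" using Sp_E[OF g] by blast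
  show ?thesis
    using PP_aut[OF f'(2) g'(2)] aut_comp[OF PP_aut[OF f'(2) g'(2)] delta_aut]
    by (simp add: p f'(1) g'(1) Phi_lm)
qed

lemma Phi_hom: assumes "p \<in> carrier SpWrC2" "q \<in> carrier SpWrC2"
  shows "Phi (wreath_mult p q) = Phi p \<circ> Phi q"
proof -
  obtain f g s where p: "p = (f, g, s)" and f: "f \<in> Sp" and g: "g \<in> Sp"
    using assms(1) by (auto simp: SpWrC2_def)
  obtain f2 g2 s2 where q: "q = (f2, g2, s2)" and f2: "f2 \<in> Sp" and g2: "g2 \<in> Sp"
    using assms(2) by (auto simp: SpWrC2_def)
  obtain a b c d where f': "f = lm a b c d" using Sp_E[OF f] by blast
  obtain a' b' c' d' where g': "g = lm a' b' c' d'" using Sp_E[OF g] by blast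
  obtain p1 q1 r1 s1 where f2': "f2 = lm p1 q1 r1 s1" using Sp_E[OF f2] by blast
  obtain p2 q2 r2 s2' where g2': "g2 = lm p2 q2 r2 s2'" using Sp_E[OF g2] by blast
  show ?thesis
    by (cases s; cases s2; simp add: p q f' g' f2' g2' wreath_mult_def lm_comp Phi_lm fun_eq_iff
        PP_comp delta_PP delta_delta)
qed

lemma Phi_basis: "Phi (lm a b c d, lm a' b' c' d', s) (V 0 0 1 0 0 0 0 0 0 0) =
     (if s then V 0 0 0 0 a 0 0 c 0 0 else V 0 0 a' c' 0 0 0 0 0 0)"
  "Phi (lm a b c d, lm a' b' c' d', s) (V 0 0 0 1 0 0 0 0 0 0) =
     (if s then V 0 0 0 0 b 0 0 d 0 0 else V 0 0 b' d' 0 0 0 0 0 0)"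
  "Phi (lm a b c d, lm a' b' c' d', s) (V 0 0 0 0 1 0 0 0 0 0) =
     (if s then V 0 0 a' c' 0 0 0 0 0 0 else V 0 0 0 0 a 0 0 c 0 0)"
  "Phi (lm a b c d, lm a' b' c' d', s) (V 0 0 0 0 0 0 0 1 0 0) =
     (if s then V 0 0 b' d' 0 0 0 0 0 0 else V 0 0 0 0 b 0 0 d 0 0)"
  by (simp_all add: Phi_lm PP_V delta_V)

lemma Phi_inj: "inj_on Phi (carrier SpWrC2)"
proof (rule inj_onI)
  fix p q assume pc: "p \<in> carrier SpWrC2" and qc: "q \<in> carrier SpWrC2" and eq: "Phi p = Phi q"
  obtain f g s where p: "p = (f, g, s)" and f: "f \<in> Sp" and g: "g \<in> Sp"
    using pc by (auto simp: SpWrC2_def)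
  obtain f2 g2 s2 where q: "q = (f2, g2, s2)" and f2: "f2 \<in> Sp" and g2: "g2 \<in> Sp"
    using qc by (auto simp: SpWrC2_def)
  obtain a b c d where f': "f = lm a b c d" "a*d - b*c = 1" using Sp_E[OF f] by blast
  obtain a' b' c' d' where g': "g = lm a' b' c' d'" "a'*d' - b'*c' = 1" using Sp_E[OF g] by blast
  obtain p1 q1 r1 s1 where f2': "f2 = lm p1 q1 r1 s1" "p1*s1 - q1*r1 = 1" using Sp_E[OF f2] by blast
  obtain p2 q2 r2 s2' where g2': "g2 = lm p2 q2 r2 s2'" "p2*s2' - q2*r2 = 1" using Sp_E[OF g2] by blast
  have e1: "Phi p (V 0 0 1 0 0 0 0 0 0 0) = Phi q (V 0 0 1 0 0 0 0 0 0 0)"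
   and e2: "Phi p (V 0 0 0 1 0 0 0 0 0 0) = Phi q (V 0 0 0 1 0 0 0 0 0 0)"
   and e3: "Phi p (V 0 0 0 0 1 0 0 0 0 0) = Phi q (V 0 0 0 0 1 0 0 0 0 0)"
   and e4: "Phi p (V 0 0 0 0 0 0 0 1 0 0) = Phi q (V 0 0 0 0 0 0 0 1 0 0)" using eq by simp_all
  note E = e1 e2 e3 e4
  show "p = q"
  proof (cases s; cases s2)
    assume "s" "s2" then show ?thesis using E f'(2) g'(2) f2'(2) g2'(2)
      by (simp add: p q f'(1) g'(1) f2'(1) g2'(1) Phi_basis V_eq)
  next
    assume "s" "\<not> s2" then show ?thesis using E f'(2) g'(2) f2'(2) g2'(2)
      by (simp add: p q f'(1) g'(1) f2'(1) g2'(1) Phi_basis V_eq)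
  next
    assume "\<not> s" "s2" then show ?thesis using E f'(2) g'(2) f2'(2) g2'(2)
      by (simp add: p q f'(1) g'(1) f2'(1) g2'(1) Phi_basis V_eq)
  next
    assume "\<not> s" "\<not> s2" then show ?thesis using E f'(2) g'(2) f2'(2) g2'(2)
      by (simp add: p q f'(1) g'(1) f2'(1) g2'(1) Phi_basis V_eq)
  qed
qed



abbreviation "kone \<equiv> V 1 0 0 0 0 0 0 0 0 (0::'a::field)"
abbreviation "kzero \<equiv> V 0 0 0 0 0 0 0 0 0 (0::'a::field)"
definition kz :: "'a::field k10" where "kz = V (-3/8) 1 0 0 0 0 0 0 0 0"
definition kp1 :: "'a::field k10" where "kp1 = V (-1/2) 2 0 0 0 0 0 0 0 0"
definition kp2 :: "'a::field k10" where "kp2 = V (3/2) (-2) 0 0 0 0 0 0 0 0"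
abbreviation "BEX \<equiv> V 0 0 1 0 0 0 0 0 0 (0::'a::field)"
abbreviation "BEY \<equiv> V 0 0 0 1 0 0 0 0 0 (0::'a::field)"
abbreviation "BXE \<equiv> V 0 0 0 0 1 0 0 0 0 (0::'a::field)"
abbreviation "BYE \<equiv> V 0 0 0 0 0 0 0 1 0 (0::'a::field)"
abbreviation "BXX \<equiv> V 0 0 0 0 0 1 0 0 0 (0::'a::field)"

lemma aut_bij: "is_aut_k10 \<phi> \<Longrightarrow> bij \<phi>" unfolding is_aut_k10_def by blast
lemma aut_add: "is_aut_k10 \<phi> \<Longrightarrow> \<phi> (k10_add u v) = k10_add (\<phi> u) (\<phi> v)" unfolding is_aut_k10_def by blast
lemma aut_scale: "is_aut_k10 \<phi> \<Longrightarrow> \<phi> (k10_scale t u) = k10_scale t (\<phi> u)" unfolding is_aut_k10_def by blast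
lemma aut_mult: "is_aut_k10 \<phi> \<Longrightarrow> \<phi> (k10_mult u v) = k10_mult (\<phi> u) (\<phi> v)" unfolding is_aut_k10_def by blast
lemma aut_even: "is_aut_k10 \<phi> \<Longrightarrow> k10_even u \<Longrightarrow> k10_even (\<phi> u)" unfolding is_aut_k10_def by blast
lemma aut_odd: "is_aut_k10 \<phi> \<Longrightarrow> k10_odd u \<Longrightarrow> k10_odd (\<phi> u)" unfolding is_aut_k10_def by blast
lemma aut_inj: "is_aut_k10 \<phi> \<Longrightarrow> \<phi> u = \<phi> v \<Longrightarrow> u = v"
  using aut_bij bij_is_inj inj_eq by metis
lemma aut_surj: "is_aut_k10 \<phi> \<Longrightarrow> \<exists>v. \<phi> v = w"
  using aut_bij by (metis bij_pointE)

lemma one_mult: "k10_mult kone u = u"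
  by (cases u rule: V_exhaust; simp add: mult_V)
lemma mult_one: "k10_mult u kone = u"
  by (cases u rule: V_exhaust; simp add: mult_V)

lemma aut_one: assumes "is_aut_k10 \<phi>" shows "\<phi> kone = kone"
proof -
  obtain v where v: "\<phi> v = kone" using aut_surj[OF assms] by blast
  have "\<phi> kone = k10_mult (\<phi> kone) kone" by (simp add: mult_one)
  also have "\<dots> = k10_mult (\<phi> kone) (\<phi> v)" by (simp add: v)
  also have "\<dots> = \<phi> (k10_mult kone v)" by (simp add: aut_mult[OF assms])
  also have "\<dots> = kone" by (simp add: one_mult v)
  finally show ?thesis .
qed

lemma aut_zero: assumes "is_aut_k10 \<phi>" shows "\<phi> kzero = kzero"
proof -
  have "\<phi> kzero = \<phi> (k10_scale 0 kzero)" by (simp add: scale_V)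
  also have "\<dots> = kzero" unfolding aut_scale[OF assms]
    by (cases "\<phi> kzero" rule: V_exhaust; simp add: scale_V)
  finally show ?thesis .
qed

lemma even_odd_zero: "k10_even u \<Longrightarrow> k10_odd u \<Longrightarrow> u = kzero"
  by (cases u rule: V_exhaust; simp add: even_V odd_V)

lemma odd_add_scale: "k10_odd u \<Longrightarrow> k10_odd w \<Longrightarrow> k10_odd (k10_add u (k10_scale t w))"
  by (cases u rule: V_exhaust; cases w rule: V_exhaust; simp add: odd_V add_V scale_V)

lemma aut_odd_rev: assumes a: "is_aut_k10 \<phi>" and o: "k10_odd (\<phi> v)" shows "k10_odd v"
proof -
  obtain c ee ex ey xe xx xy ye yx yy where v: "v = V c ee ex ey xe xx xy ye yx yy" by (rule V_exhaust)
  let ?ev = "V c ee 0 0 0 xx xy 0 yx yy" and ?od = "V 0 0 ex ey xe 0 0 ye 0 0"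
  have "?ev = k10_add v (k10_scale (-1) ?od)" by (simp add: v add_V scale_V)
  then have "\<phi> ?ev = k10_add (\<phi> v) (k10_scale (-1) (\<phi> ?od))" by (simp add: aut_add[OF a] aut_scale[OF a])
  moreover have "k10_odd (\<phi> ?od)" by (rule aut_odd[OF a]) (simp add: odd_V)
  ultimately have "k10_odd (\<phi> ?ev)" using odd_add_scale o by metis
  moreover have "k10_even (\<phi> ?ev)" by (rule aut_even[OF a]) (simp add: even_V)
  ultimately have "\<phi> ?ev = \<phi> kzero" using even_odd_zero aut_zero[OF a] by metis
  then have "?ev = kzero" by (rule aut_inj[OF a])
  then show ?thesis by (simp add: v V_eq odd_V)
qed

lemma p1_odd: assumes "(2::'a::field) \<noteq> 0" shows "k10_odd (v::'a k10) \<Longrightarrow> k10_mult kp1 v = k10_scale (1/2) v"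
  by (cases v rule: V_exhaust; simp add: kp1_def odd_V mult_V scale_V V_eq)





lemma twos: assumes "(2::'a::field) \<noteq> 0"
  shows "(4::'a) \<noteq> 0" "(8::'a) \<noteq> 0" "(16::'a) \<noteq> 0" "(32::'a) \<noteq> 0" "(64::'a) \<noteq> 0" "(128::'a) \<noteq> 0" "(256::'a) \<noteq> 0"
proof -
  have "\<And>n. (2::'a)^n \<noteq> 0" using assms by simp
  from this[of 2] this[of 3] this[of 4] this[of 5] this[of 6] this[of 7] this[of 8]
  show "(4::'a) \<noteq> 0" "(8::'a) \<noteq> 0" "(16::'a) \<noteq> 0" "(32::'a) \<noteq> 0" "(64::'a) \<noteq> 0" "(128::'a) \<noteq> 0" "(256::'a) \<noteq> 0"
    by simp_all
qed

lemma aut_p1: assumes a: "is_aut_k10 \<phi>" and two: "(2::'a::field) \<noteq> 0"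
  shows "\<phi> (kp1::'a k10) = kp1"
proof -
  note tw = twos[OF two]
  have four: "(4::'a) \<noteq> 0" using tw by simp
  have sixteen: "(16::'a) \<noteq> 0" using tw by simp
  have half: "\<And>w. k10_odd w \<Longrightarrow> k10_mult (\<phi> kp1) w = k10_scale (1/2) w"
  proof -
    fix w :: "'a k10" assume wo: "k10_odd w"
    obtain v where v: "\<phi> v = w" using aut_surj[OF a] by blast
    have vo: "k10_odd v" using aut_odd_rev[OF a] wo v by blast
    have "k10_mult (\<phi> kp1) w = \<phi> (k10_mult kp1 v)" by (simp add: aut_mult[OF a] v)
    also have "\<dots> = \<phi> (k10_scale (1/2) v)" by (simp only: p1_odd[OF two vo])
    also have "\<dots> = k10_scale (1/2) w" by (simp add: aut_scale[OF a] v)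
    finally show "k10_mult (\<phi> kp1) w = k10_scale (1/2) w" .
  qed
  have qe: "k10_even (\<phi> kp1)" by (rule aut_even[OF a]) (simp add: kp1_def even_V)
  obtain qa qe' q3 q4 q5 r s q8 t w where q: "\<phi> kp1 = V qa qe' q3 q4 q5 r s q8 t w" by (rule V_exhaust)
  have q0: "q3 = 0" "q4 = 0" "q5 = 0" "q8 = 0" using qe by (simp_all add: q even_V)
  have h1: "k10_mult (\<phi> kp1) BEX = k10_scale (1/2) BEX" by (rule half) (simp add: odd_V)
  have h2: "k10_mult (\<phi> kp1) BEY = k10_scale (1/2) BEY" by (rule half) (simp add: odd_V)
  from h1 have e1: "qa + qe'/2 = 1/2" "s = 0" "w = 0"
    using two by (simp_all add: q q0 mult_V scale_V V_eq)
  from h2 have e2: "r = 0" "t = 0"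
    using two by (simp_all add: q q0 mult_V scale_V V_eq)
  have "2 * (qe' + qa*2) = 2 * 1" using e1(1) two by (simp add: field_simps)
  then have "qe' + qa*2 = 1" using two by (metis mult_left_cancel)
  then have qe'_eq: "qe' = 1 - 2*qa" by (simp add: algebra_simps)
  have idem: "k10_mult kp1 kp1 = (kp1::'a k10)" using two tw by (simp add: kp1_def mult_V V_eq) (simp add: field_simps)
  have "k10_mult (\<phi> kp1) (\<phi> kp1) = \<phi> kp1" using idem by (metis aut_mult[OF a])
  then have "qa * qa - 3/16 * qe' * qe' = qa"
    by (simp add: q q0 e1(2,3) e2 mult_V V_eq)
  then have "qa * qa - 3/16 * (1 - 2*qa) * (1 - 2*qa) = qa" by (simp add: qe'_eq)
  then have z0: "qa * qa - 3/16 * (1 - 2*qa) * (1 - 2*qa) - qa = 0" by simp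
  have "(2*qa - 3) * (2*qa + 1) / 16 = qa * qa - 3/16 * (1 - 2*qa) * (1 - 2*qa) - qa"
    using sixteen by (simp add: field_simps)
  then have "(2*qa - 3) * (2*qa + 1) / 16 = 0" using z0 by (rule trans)
  then have "(2*qa - 3) * (2*qa + 1) = 0" using sixteen by simp
  then have "2*qa - 3 = 0 \<or> 2*qa + 1 = 0" by (simp only: mult_eq_0_iff)
  then consider "2*qa = 3" | "2*qa = -1" by (auto simp: algebra_simps eq_neg_iff_add_eq_0)
  then show ?thesis
  proof cases
    case 2
    then have "qa = -1/2" using two by (simp add: field_simps)
    then show ?thesis unfolding q using two by (simp add: kp1_def q0 e1(2,3) e2 qe'_eq V_eq)
  next
    case 1
    then have qa: "qa = 3/2" using two by (metis nonzero_mult_div_cancel_left)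
    have qp2: "\<phi> kp1 = kp2" unfolding q using two by (simp add: qa kp2_def q0 e1(2,3) e2 qe'_eq V_eq)
    have "(kp2::'a k10) = k10_add kone (k10_scale (-1) kp1)" using two by (simp add: kp1_def kp2_def add_V scale_V V_eq)
    then have "\<phi> kp2 = \<phi> (k10_add kone (k10_scale (-1) kp1))" by (rule arg_cong)
    also have "\<dots> = k10_add kone (k10_scale (-1) kp2)"
      by (simp only: aut_add[OF a] aut_scale[OF a] aut_one[OF a] qp2)
    also have "\<dots> = kp1" using two by (simp add: kp1_def kp2_def add_V scale_V V_eq) (simp add: field_simps)
    finally have pp2: "\<phi> kp2 = kp1" .
    have "k10_mult kp1 BXX = (kzero::'a k10)" using two four by (simp add: kp1_def mult_V V_eq)
    then have "k10_mult kp2 (\<phi> BXX) = kzero" by (metis aut_mult[OF a] qp2 aut_zero[OF a])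
    moreover have "k10_even (\<phi> BXX)" by (rule aut_even[OF a]) (simp add: even_V)
    moreover obtain w1 w2 w3 w4 w5 w6 w7 w8 w9 w10 where wv: "\<phi> BXX = V w1 w2 w3 w4 w5 w6 w7 w8 w9 w10" by (rule V_exhaust)
    ultimately have "w3 = 0" "w4 = 0" "w5 = 0" "w8 = 0"
      and m: "k10_mult kp2 (V w1 w2 0 0 0 w6 w7 0 w9 w10) = kzero" by (simp_all add: even_V)
    from m have "w6 = 0" "w7 = 0" "w9 = 0" "w10 = 0" and w2': "- w2 = w1 * 4"
      using two tw by (simp_all add: kp2_def mult_V V_eq field_simps)
    moreover from w2' have "w2 = - (w1 * 4)" by (metis minus_minus)
    ultimately have "\<phi> BXX = k10_scale (-2 * w1) (\<phi> kp2)"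
      using \<open>w3 = 0\<close> \<open>w4 = 0\<close> \<open>w5 = 0\<close> \<open>w8 = 0\<close> two by (simp add: wv pp2 kp1_def scale_V V_eq)
    then have "\<phi> BXX = \<phi> (k10_scale (-2 * w1) kp2)" by (simp add: aut_scale[OF a])
    then have "BXX = k10_scale (-2 * w1) kp2" by (rule aut_inj[OF a])
    then show ?thesis using two by (simp add: kp2_def scale_V V_eq)
  qed
qed



lemma pair_split: fixes m1 :: "'a::field"
  assumes two: "(2::'a) \<noteq> 0"
    and h: "k10_mult (V 0 0 m1 m2 m3 0 0 m4 0 0) (V 0 0 n1 n2 n3 0 0 n4 0 0) = kz"
  shows "(m3 = 0 \<and> m4 = 0 \<and> n3 = 0 \<and> n4 = 0 \<and> m1*n2 - m2*n1 = 1) \<or>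
         (m1 = 0 \<and> m2 = 0 \<and> n1 = 0 \<and> n2 = 0 \<and> m3*n4 - m4*n3 = 1)"
proof -
  note tw = twos[OF two]
  have hv: "V (3/8 * (n1 * m2 - m1 * n2 + n3 * m4 - m3 * n4)) (m1 * n2 - n1 * m2 + m3 * n4 - n3 * m4)
     0 0 0 ((n1 * m3 - m1 * n3)/4) ((n2 * m3 - m2 * n3)/4) 0 ((n1 * m4 - m1 * n4)/4) ((n2 * m4 - m2 * n4)/4) = kz"
    using h unfolding mult_V by simp
  have e0: "m1 * n2 - n1 * m2 + m3 * n4 - n3 * m4 = 1"
    and q1: "(n1 * m3 - m1 * n3)/4 = 0" and q2: "(n2 * m3 - m2 * n3)/4 = 0"
    and q3: "(n1 * m4 - m1 * n4)/4 = 0" and q4: "(n2 * m4 - m2 * n4)/4 = 0"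
    using hv unfolding kz_def V_eq by simp_all
  have e1: "n1 * m3 - m1 * n3 = 0" using q1 tw by simp
  have e2: "n2 * m3 - m2 * n3 = 0" using q2 tw by simp
  have e3: "n1 * m4 - m1 * n4 = 0" using q3 tw by simp
  have e4: "n2 * m4 - m2 * n4 = 0" using q4 tw by simp
  define D1 where "D1 = m1*n2 - m2*n1"
  define D2 where "D2 = m3*n4 - m4*n3"
  have s: "D1 + D2 = 1" using e0 by (simp add: D1_def D2_def algebra_simps)
  have "m3 * D1 = m1*(n2*m3 - m2*n3) - m2*(n1*m3 - m1*n3)" by (simp add: D1_def algebra_simps)
  then have a1: "m3 * D1 = 0" using e1 e2 by simp
  have "m4 * D1 = m1*(n2*m4 - m2*n4) - m2*(n1*m4 - m1*n4)" by (simp add: D1_def algebra_simps)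
  then have a2: "m4 * D1 = 0" using e3 e4 by simp
  have "n3 * D1 = n1*(n2*m3 - m2*n3) - n2*(n1*m3 - m1*n3)" by (simp add: D1_def algebra_simps)
  then have a3: "n3 * D1 = 0" using e1 e2 by simp
  have "n4 * D1 = n1*(n2*m4 - m2*n4) - n2*(n1*m4 - m1*n4)" by (simp add: D1_def algebra_simps)
  then have a4: "n4 * D1 = 0" using e3 e4 by simp
  have "m1 * D2 = m4*(n1*m3 - m1*n3) - m3*(n1*m4 - m1*n4)" by (simp add: D2_def algebra_simps)
  then have b1: "m1 * D2 = 0" using e1 e3 by simp
  have "m2 * D2 = m4*(n2*m3 - m2*n3) - m3*(n2*m4 - m2*n4)" by (simp add: D2_def algebra_simps)
  then have b2: "m2 * D2 = 0" using e2 e4 by simp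
  have "n1 * D2 = n4*(n1*m3 - m1*n3) - n3*(n1*m4 - m1*n4)" by (simp add: D2_def algebra_simps)
  then have b3: "n1 * D2 = 0" using e1 e3 by simp
  have "n2 * D2 = n4*(n2*m3 - m2*n3) - n3*(n2*m4 - m2*n4)" by (simp add: D2_def algebra_simps)
  then have b4: "n2 * D2 = 0" using e2 e4 by simp
  show ?thesis
  proof (cases "D1 = 0")
    case True
    then have d2: "D2 = 1" using s by simp
    then have "m1 = 0" "m2 = 0" "n1 = 0" "n2 = 0" using b1 b2 b3 b4 by simp_all
    moreover have "m3*n4 - m4*n3 = 1" using d2 by (simp add: D2_def)
    ultimately show ?thesis by blast
  next
    case False
    then have "m3 = 0" "m4 = 0" "n3 = 0" "n4 = 0" using a1 a2 a3 a4 by simp_all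
    then have "D2 = 0" by (simp add: D2_def)
    then have "D1 = 1" using s by simp
    then have "m1*n2 - m2*n1 = 1" by (simp add: D1_def)
    then show ?thesis using \<open>m3 = 0\<close> \<open>m4 = 0\<close> \<open>n3 = 0\<close> \<open>n4 = 0\<close> by blast
  qed
qed

lemma cross_M1: assumes two: "(2::'a::field) \<noteq> 0" shows "k10_mult (V 0 0 a b 0 0 0 0 0 0) (V 0 0 c d 0 0 0 0 0 0) = k10_scale (a*d - b*c) (kz::'a::field k10)"
  using twos[OF two] by (simp add: mult_V kz_def scale_V V_eq) (simp add: field_simps)

lemma cross_M2: assumes two: "(2::'a::field) \<noteq> 0" shows "k10_mult (V 0 0 0 0 a 0 0 b 0 0) (V 0 0 0 0 c 0 0 d 0 0) = k10_scale (a*d - b*c) (kz::'a::field k10)"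
  using twos[OF two] by (simp add: mult_V kz_def scale_V V_eq) (simp add: field_simps)

lemma aut_z: assumes a: "is_aut_k10 \<phi>" and two: "(2::'a::field) \<noteq> 0" shows "\<phi> (kz::'a k10) = kz"
proof -
  note tw = twos[OF two]
  have "(kz::'a k10) = k10_add (k10_scale (1/2) kp1) (k10_scale (-1/8) kone)"
    using two tw by (simp add: kz_def kp1_def add_V scale_V V_eq) (simp add: field_simps)
  then show ?thesis
    by (metis aut_add[OF a] aut_scale[OF a] aut_p1[OF a two] aut_one[OF a])
qed

lemma BB_kz: "k10_mult BEX BEY = (kz::'a::field k10)" "k10_mult BXE BYE = (kz::'a::field k10)"
  by (simp_all add: mult_V kz_def V_eq)

lemma aut_agree: fixes \<phi> :: "'a::field k10 \<Rightarrow> 'a k10"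
  assumes a: "is_aut_k10 \<phi>" and b: "is_aut_k10 \<psi>" and two: "(2::'a) \<noteq> 0"
   and h1: "\<phi> BEX = \<psi> BEX" and h2: "\<phi> BEY = \<psi> BEY" and h3: "\<phi> BXE = \<psi> BXE" and h4: "\<phi> BYE = \<psi> BYE"
  shows "\<phi> = \<psi>"
proof
  fix u :: "'a k10"
  note tw = twos[OF two]
  have h0: "\<phi> kone = \<psi> kone" using aut_one[OF a] aut_one[OF b] by simp
  have "(V 0 1 0 0 0 0 0 0 0 0 :: 'a k10) = k10_add (k10_mult BEX BEY) (k10_scale (3/8) kone)"
    using tw by (simp add: mult_V add_V scale_V V_eq)
  then have hEE: "\<phi> (V 0 1 0 0 0 0 0 0 0 0) = \<psi> (V 0 1 0 0 0 0 0 0 0 0)"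
    by (simp add: aut_add[OF a] aut_add[OF b] aut_scale[OF a] aut_scale[OF b] aut_mult[OF a] aut_mult[OF b] h0 h1 h2)
  have "(V 0 0 0 0 0 1 0 0 0 0 :: 'a k10) = k10_scale 4 (k10_mult BXE BEX)"
    using tw by (simp add: mult_V scale_V V_eq)
  then have hXX: "\<phi> (V 0 0 0 0 0 1 0 0 0 0) = \<psi> (V 0 0 0 0 0 1 0 0 0 0)"
    by (simp add: aut_scale[OF a] aut_scale[OF b] aut_mult[OF a] aut_mult[OF b] h1 h3)
  have "(V 0 0 0 0 0 0 1 0 0 0 :: 'a k10) = k10_scale 4 (k10_mult BXE BEY)"
    using tw by (simp add: mult_V scale_V V_eq)
  then have hXY: "\<phi> (V 0 0 0 0 0 0 1 0 0 0) = \<psi> (V 0 0 0 0 0 0 1 0 0 0)"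
    by (simp add: aut_scale[OF a] aut_scale[OF b] aut_mult[OF a] aut_mult[OF b] h2 h3)
  have "(V 0 0 0 0 0 0 0 0 1 0 :: 'a k10) = k10_scale 4 (k10_mult BYE BEX)"
    using tw by (simp add: mult_V scale_V V_eq)
  then have hYX: "\<phi> (V 0 0 0 0 0 0 0 0 1 0) = \<psi> (V 0 0 0 0 0 0 0 0 1 0)"
    by (simp add: aut_scale[OF a] aut_scale[OF b] aut_mult[OF a] aut_mult[OF b] h1 h4)
  have "(V 0 0 0 0 0 0 0 0 0 1 :: 'a k10) = k10_scale 4 (k10_mult BYE BEY)"
    using tw by (simp add: mult_V scale_V V_eq)
  then have hYY: "\<phi> (V 0 0 0 0 0 0 0 0 0 1) = \<psi> (V 0 0 0 0 0 0 0 0 0 1)"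
    by (simp add: aut_scale[OF a] aut_scale[OF b] aut_mult[OF a] aut_mult[OF b] h2 h4)
  obtain c ee ex ey xe xx xy ye yx yy where u: "u = V c ee ex ey xe xx xy ye yx yy" by (rule V_exhaust)
  have dec: "u = k10_add (k10_scale c kone) (k10_add (k10_scale ee (V 0 1 0 0 0 0 0 0 0 0))
     (k10_add (k10_scale ex BEX) (k10_add (k10_scale ey BEY) (k10_add (k10_scale xe BXE)
     (k10_add (k10_scale xx (V 0 0 0 0 0 1 0 0 0 0)) (k10_add (k10_scale xy (V 0 0 0 0 0 0 1 0 0 0))
     (k10_add (k10_scale ye BYE) (k10_add (k10_scale yx (V 0 0 0 0 0 0 0 0 1 0))
     (k10_scale yy (V 0 0 0 0 0 0 0 0 0 1))))))))))"
    by (simp add: u add_V scale_V)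
  show "\<phi> u = \<psi> u"
    unfolding dec by (simp only: aut_add[OF a] aut_add[OF b] aut_scale[OF a] aut_scale[OF b] h0 h1 h2 h3 h4 hEE hXX hXY hYX hYY)
qed



lemma aut_eq_PP: assumes a: "is_aut_k10 \<phi>" and two: "(2::'a::field) \<noteq> 0"
  and h1: "\<phi> BEX = V 0 0 g11 g21 0 0 0 0 0 (0::'a)" and h2: "\<phi> BEY = V 0 0 g12 g22 0 0 0 0 0 0"
  and h3: "\<phi> BXE = V 0 0 0 0 f11 0 0 f21 0 0" and h4: "\<phi> BYE = V 0 0 0 0 f12 0 0 f22 0 0"
  and df: "f11*f22 - f12*f21 = 1" and dg: "g11*g22 - g12*g21 = 1"
  shows "\<phi> = Phi_pair (lm f11 f12 f21 f22) (lm g11 g12 g21 g22)"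
  by (rule aut_agree[OF a PP_aut[OF df dg] two]) (simp_all add: h1 h2 h3 h4 PP_V)

lemma odd_shape: "k10_odd w \<Longrightarrow> \<exists>a b c d. w = V 0 0 a b c 0 0 d 0 0"
  by (cases w rule: V_exhaust) (auto simp: odd_V)

lemma cross_ne: assumes two: "(2::'a::field) \<noteq> 0" shows "k10_mult BEX BXE \<noteq> k10_scale t (kz::'a k10)"
  using twos[OF two] by (simp add: mult_V kz_def scale_V V_eq)

lemma aut_surj_Phi: fixes \<phi> :: "'a::field k10 \<Rightarrow> 'a k10"
  assumes a: "is_aut_k10 \<phi>" and two: "(2::'a) \<noteq> 0"
  shows "\<exists>p \<in> carrier SpWrC2. Phi p = \<phi>"
proof -
  have "k10_odd (\<phi> BEX)" by (rule aut_odd[OF a]) (simp add: odd_V)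
  then obtain m1 m2 m3 m4 where hm: "\<phi> BEX = V 0 0 m1 m2 m3 0 0 m4 0 0"
    using odd_shape by blast
  have "k10_odd (\<phi> BEY)" by (rule aut_odd[OF a]) (simp add: odd_V)
  then obtain n1 n2 n3 n4 where hn: "\<phi> BEY = V 0 0 n1 n2 n3 0 0 n4 0 0"
    using odd_shape by blast
  have "k10_odd (\<phi> BXE)" by (rule aut_odd[OF a]) (simp add: odd_V)
  then obtain k1 k2 k3 k4 where hk: "\<phi> BXE = V 0 0 k1 k2 k3 0 0 k4 0 0"
    using odd_shape by blast
  have "k10_odd (\<phi> BYE)" by (rule aut_odd[OF a]) (simp add: odd_V)
  then obtain l1 l2 l3 l4 where hl: "\<phi> BYE = V 0 0 l1 l2 l3 0 0 l4 0 0"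
    using odd_shape by blast
  have "k10_mult (\<phi> BEX) (\<phi> BEY) = kz"
    using aut_mult[OF a, of BEX BEY] BB_kz(1) aut_z[OF a two] by metis
  then have E: "k10_mult (V 0 0 m1 m2 m3 0 0 m4 0 0) (V 0 0 n1 n2 n3 0 0 n4 0 0) = kz" by (simp only: hm hn)
  have "k10_mult (\<phi> BXE) (\<phi> BYE) = kz"
    using aut_mult[OF a, of BXE BYE] BB_kz(2) aut_z[OF a two] by metis
  then have X: "k10_mult (V 0 0 k1 k2 k3 0 0 k4 0 0) (V 0 0 l1 l2 l3 0 0 l4 0 0) = kz" by (simp only: hk hl)
  have cr: "\<phi> (k10_mult BEX BXE) = k10_mult (\<phi> BEX) (\<phi> BXE)" by (rule aut_mult[OF a])
  have crz: "\<And>t. \<phi> (k10_scale t kz) = k10_scale t kz" using aut_scale[OF a] aut_z[OF a two] by simp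
  from pair_split[OF two E] pair_split[OF two X] show ?thesis
  proof (elim disjE conjE)
    assume "m3 = 0" "m4 = 0" "n3 = 0" "n4 = 0" "m1 * n2 - m2 * n1 = 1"
      "k3 = 0" "k4 = 0" "l3 = 0" "l4 = 0" "k1 * l2 - k2 * l1 = 1"
    then have "k10_mult (\<phi> BEX) (\<phi> BXE) = k10_scale (m1*k2 - m2*k1) kz"
      by (simp add: hm hk cross_M1[OF two])
    then have "\<phi> (k10_mult BEX BXE) = \<phi> (k10_scale (m1*k2 - m2*k1) kz)" using cr crz by simp
    then have "k10_mult BEX BXE = k10_scale (m1*k2 - m2*k1) kz" by (rule aut_inj[OF a])
    then show ?thesis using cross_ne[OF two] by blast
  next
    assume "m1 = 0" "m2 = 0" "n1 = 0" "n2 = 0" "m3 * n4 - m4 * n3 = 1"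
      "k1 = 0" "k2 = 0" "l1 = 0" "l2 = 0" "k3 * l4 - k4 * l3 = 1"
    then have "k10_mult (\<phi> BEX) (\<phi> BXE) = k10_scale (m3*k4 - m4*k3) kz"
      by (simp add: hm hk cross_M2[OF two])
    then have "\<phi> (k10_mult BEX BXE) = \<phi> (k10_scale (m3*k4 - m4*k3) kz)" using cr crz by simp
    then have "k10_mult BEX BXE = k10_scale (m3*k4 - m4*k3) kz" by (rule aut_inj[OF a])
    then show ?thesis using cross_ne[OF two] by blast
  next
    assume z: "m3 = 0" "m4 = 0" "n3 = 0" "n4 = 0" and dg: "m1 * n2 - m2 * n1 = 1"
      and z2: "k1 = 0" "k2 = 0" "l1 = 0" "l2 = 0" and df: "k3 * l4 - k4 * l3 = 1"
    have dg': "m1 * n2 - n1 * m2 = 1" using dg by (simp add: mult.commute)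
    have df': "k3 * l4 - l3 * k4 = 1" using df by (simp add: mult.commute)
    have eq: "\<phi> = Phi_pair (lm k3 l3 k4 l4) (lm m1 n1 m2 n2)"
      by (rule aut_eq_PP[OF a two _ _ _ _ df' dg']) (simp_all add: hm hn hk hl z z2)
    show ?thesis
    proof
      show "(lm k3 l3 k4 l4, lm m1 n1 m2 n2, False) \<in> carrier SpWrC2"
        using lm_Sp[OF df'] lm_Sp[OF dg'] by (simp add: SpWrC2_def)
      show "Phi (lm k3 l3 k4 l4, lm m1 n1 m2 n2, False) = \<phi>" by (simp add: Phi_lm eq)
    qed
  next
    assume z: "m1 = 0" "m2 = 0" "n1 = 0" "n2 = 0" and df: "m3 * n4 - m4 * n3 = 1"
      and z2: "k3 = 0" "k4 = 0" "l3 = 0" "l4 = 0" and dg: "k1 * l2 - k2 * l1 = 1"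
    have dg': "k1 * l2 - l1 * k2 = 1" using dg by (simp add: mult.commute)
    have df': "m3 * n4 - n3 * m4 = 1" using df by (simp add: mult.commute)
    let ?\<psi> = "\<phi> \<circ> delta"
    have b: "is_aut_k10 ?\<psi>" by (rule aut_comp[OF a delta_aut])
    have eq: "?\<psi> = Phi_pair (lm m3 n3 m4 n4) (lm k1 l1 k2 l2)"
      by (rule aut_eq_PP[OF b two _ _ _ _ df' dg']) (simp_all add: delta_V hm hn hk hl z z2)
    have "\<phi> = ?\<psi> \<circ> delta" by (simp add: fun_eq_iff delta_delta)
    then have eq2: "\<phi> = Phi_pair (lm m3 n3 m4 n4) (lm k1 l1 k2 l2) \<circ> delta" by (simp only: eq)
    show ?thesis
    proof
      show "(lm m3 n3 m4 n4, lm k1 l1 k2 l2, True) \<in> carrier SpWrC2"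
        using lm_Sp[OF df'] lm_Sp[OF dg'] by (simp add: SpWrC2_def)
      show "Phi (lm m3 n3 m4 n4, lm k1 l1 k2 l2, True) = \<phi>" by (simp add: Phi_lm eq2)
    qed
  qed
qed

theorem theorem3p3:
  assumes "(2::'a::field) \<noteq> 0" and "(3::'a) \<noteq> 0"
    and "\<forall>a::'a. \<exists>b. a = b * b"
  shows "(Phi :: ('a W \<Rightarrow> 'a W) \<times> ('a W \<Rightarrow> 'a W) \<times> bool \<Rightarrow> 'a k10 \<Rightarrow> 'a k10)
           \<in> iso SpWrC2 Aut_K10"
proof -
  have hom: "Phi \<in> hom SpWrC2 (Aut_K10 :: ('a k10 \<Rightarrow> 'a k10) monoid)"
    unfolding hom_def
  proof (intro CollectI conjI ballI)
    show "(Phi :: ('a W \<Rightarrow> 'a W) \<times> ('a W \<Rightarrow> 'a W) \<times> bool \<Rightarrow> 'a k10 \<Rightarrow> 'a k10) \<in> carrier SpWrC2 \<rightarrow> carrier Aut_K10"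
      using Phi_aut by (auto simp: Aut_K10_def)
  next
    fix x y :: "('a W \<Rightarrow> 'a W) \<times> ('a W \<Rightarrow> 'a W) \<times> bool"
    assume "x \<in> carrier SpWrC2" "y \<in> carrier SpWrC2"
    then show "Phi (x \<otimes>\<^bsub>SpWrC2\<^esub> y) = Phi x \<otimes>\<^bsub>Aut_K10\<^esub> Phi y"
      using Phi_hom by (simp add: SpWrC2_def Aut_K10_def)
  qed
  have "Phi ` carrier SpWrC2 = carrier (Aut_K10 :: ('a k10 \<Rightarrow> 'a k10) monoid)"
  proof
    show "Phi ` carrier SpWrC2 \<subseteq> carrier (Aut_K10 :: ('a k10 \<Rightarrow> 'a k10) monoid)"
      using Phi_aut by (auto simp: Aut_K10_def)
    show "carrier (Aut_K10 :: ('a k10 \<Rightarrow> 'a k10) monoid) \<subseteq> Phi ` carrier SpWrC2"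
    proof
      fix \<phi> :: "'a k10 \<Rightarrow> 'a k10" assume "\<phi> \<in> carrier Aut_K10"
      then have "is_aut_k10 \<phi>" by (simp add: Aut_K10_def)
      then obtain p where "p \<in> carrier SpWrC2" "Phi p = \<phi>" using aut_surj_Phi assms(1) by blast
      then show "\<phi> \<in> Phi ` carrier SpWrC2" by blast
    qed
  qed
  then have "bij_betw Phi (carrier SpWrC2) (carrier (Aut_K10 :: ('a k10 \<Rightarrow> 'a k10) monoid))"
    using Phi_inj by (simp add: bij_betw_def)
  then show ?thesis using hom by (simp add: iso_def)
qed
end
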